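(* Let $x^k\in\mathbb{R}^n$, let $G_k\in\mathcal{S}_{\ell,\mu}(F,x^k)$, let $x^{k+1}$ be the minimizer of $\min_{x\in\mathbb{R}^n}\max_{c^*\in C}\langle c^*,G_k(x)\rangle$, and let $c_k^*$ be a maximizer of $\max_{c^*\in C}\min_{x\in\mathbb{R}^n}\langle c^*,G_k(x)\rangle$. Then for all $x\in\mathbb{R}^n$: (i) $H_k(x)\preceq_K\tfrac12\|x-x^k\|^2\ell$; (ii) $\langle c_k^*,F(x^{k+1})\rangle+\tfrac12\|x^{k+1}-x\|^2\langle c_k^*,\mu\rangle\le\langle c_k^*,F(x)\rangle+\tfrac12\|x^k-x\|^2\langle c_k^*,\ell\rangle$.
   Context: $K\subset\mathbb{R}^m$ is a closed, convex, pointed cone with nonempty interior; $y\preceq_K y'$ means $y'-y\in K$. $K^*=\{c\in\mathbb{R}^m:\langle c,y\rangle\ge0\ \forall y\in K\}$, and $C\subset\mathbb{R}^m$ is a compact convex set with $0\notin C$ and $\mathrm{cone}(C)=K^*$. $F:\mathbb{R}^n\to\mathbb{R}^m$ is differentiable with Jacobian $JF$. For differentiable $\Phi$: strongly $K$-convex with $\mu\in K$ means $J\Phi(x)(y-x)+\tfrac12\|y-x\|^2\mu\preceq_K\Phi(y)-\Phi(x)$ for all $x,y$; $K$-smooth with $\ell\in K$ means $\Phi(y)-\Phi(x)\preceq_K J\Phi(x)(y-x)+\tfrac12\|y-x\|^2\ell$ for all $x,y$. Surrogate class: for $\ell\in K$, $\mu\in\mathrm{int}(K)$ and $x^k\in\mathbb{R}^n$,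 $\mathcal{S}_{\ell,\mu}(F,x^k)$ is the set of differentiable $G_k:\mathbb{R}^n\to\mathbb{R}^m$ that are strongly $K$-convex with $\mu$ and such that, with $x^{k+1}$ the (unique) minimizer of $x\mapsto\max_{c^*\in C}\langle c^*,G_k(x)\rangle$ and $H_k:=G_k-F+F(x^k)$: (a) $F(x^{k+1})-F(x^k)\preceq_K G_k(x^{k+1})$; (b) $H_k$ is $K$-smooth with $\ell$, $H_k(x^k)=0$ and $JH_k(x^k)=0$. *)

theory Defs
  imports "HOL-Analysis.Analysis"
begin

definition cone_le :: "'m::euclidean_space set \<Rightarrow> 'm \<Rightarrow> 'm \<Rightarrow> bool" where
  "cone_le K y y' \<longleftrightarrow> y' - y \<in> K"

definition dual_cone :: "'m::euclidean_space set \<Rightarrow> 'm set" where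
  "dual_cone K = {c. \<forall>y\<in>K. c \<bullet> y \<ge> 0}"

definition proper_cone :: "'m::euclidean_space set \<Rightarrow> bool" where
  "proper_cone K \<longleftrightarrow> cone K \<and> closed K \<and> convex K \<and> K \<inter> uminus ` K = {0} \<and> interior K \<noteq> {}"

definition strongly_K_convex ::
  "'m::euclidean_space set \<Rightarrow> ('n::euclidean_space \<Rightarrow> 'm) \<Rightarrow> ('n \<Rightarrow> 'n \<Rightarrow> 'm) \<Rightarrow> 'm \<Rightarrow> bool" where
  "strongly_K_convex K \<Phi> \<Phi>' \<mu> \<longleftrightarrow>
     (\<forall>x y. cone_le K (\<Phi>' x (y - x) + ((1/2) * (norm (y - x))\<^sup>2) *\<^sub>R \<mu>) (\<Phi> y - \<Phi> x))"

definition K_smooth ::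
  "'m::euclidean_space set \<Rightarrow> ('n::euclidean_space \<Rightarrow> 'm) \<Rightarrow> ('n \<Rightarrow> 'n \<Rightarrow> 'm) \<Rightarrow> 'm \<Rightarrow> bool" where
  "K_smooth K \<Phi> \<Phi>' ell \<longleftrightarrow>
     (\<forall>x y. cone_le K (\<Phi> y - \<Phi> x) (\<Phi>' x (y - x) + ((1/2) * (norm (y - x))\<^sup>2) *\<^sub>R ell))"

definition scal_max :: "'m::euclidean_space set \<Rightarrow> ('n \<Rightarrow> 'm) \<Rightarrow> 'n \<Rightarrow> real" where
  "scal_max C G x = (SUP c\<in>C. c \<bullet> G x)"

definition is_minimizer :: "('n \<Rightarrow> real) \<Rightarrow> 'n \<Rightarrow> bool" where
  "is_minimizer f z \<longleftrightarrow> (\<forall>x. f z \<le> f x)"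

definition H_of :: "('n \<Rightarrow> 'm::real_vector) \<Rightarrow> ('n \<Rightarrow> 'm) \<Rightarrow> 'n \<Rightarrow> 'n \<Rightarrow> 'm" where
  "H_of G F xk = (\<lambda>x. G x - F x + F xk)"

text \<open>Surrogate class S_{ell,mu}(F, x^k); F' is the Jacobian of F.
  x^{k+1} is the (unique) minimizer of scal_max C G.\<close>
definition surrogate_class ::
  "'m::euclidean_space set \<Rightarrow> 'm set \<Rightarrow> ('n::euclidean_space \<Rightarrow> 'm) \<Rightarrow> ('n \<Rightarrow> 'n \<Rightarrow> 'm)
    \<Rightarrow> 'm \<Rightarrow> 'm \<Rightarrow> 'n \<Rightarrow> ('n \<Rightarrow> 'm) set" where
  "surrogate_class K C F F' ell \<mu> xk = {G. \<exists>G'.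
      (\<forall>x. (G has_derivative G' x) (at x)) \<and>
      strongly_K_convex K G G' \<mu> \<and>
      (\<exists>!z. is_minimizer (scal_max C G) z) \<and>
      (\<forall>z. is_minimizer (scal_max C G) z \<longrightarrow> cone_le K (F z - F xk) (G z)) \<and>
      K_smooth K (H_of G F xk) (\<lambda>x h. G' x h - F' x h) ell \<and>
      H_of G F xk xk = 0 \<and>
      (\<lambda>h. G' xk h - F' xk h) = (\<lambda>h. 0)}"

end

theory Submission imports Defs begin
lemma scal_sc:
  assumes "strongly_K_convex K G G' \<mu>" "\<forall>y\<in>K. c \<bullet> y \<ge> 0"
  shows "c \<bullet> G y \<ge> c \<bullet> G x + c \<bullet> G' x (y - x) + (1/2) * (norm (y - x))\<^sup>2 * (c \<bullet> \<mu>)"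
proof -
  have "G y - G x - (G' x (y - x) + ((1/2) * (norm (y - x))\<^sup>2) *\<^sub>R \<mu>) \<in> K"
    using assms(1) unfolding strongly_K_convex_def cone_le_def by blast
  then have "c \<bullet> (G y - G x - (G' x (y - x) + ((1/2) * (norm (y - x))\<^sup>2) *\<^sub>R \<mu>)) \<ge> 0"
    using assms(2) by blast
  then show ?thesis by (simp add: inner_diff_right inner_add_right algebra_simps)
qed

lemma scal_max_attained:
  fixes C :: "'m::euclidean_space set"
  assumes "compact C" "C \<noteq> {}"
  shows "\<exists>c\<in>C. c \<bullet> G x = scal_max C G x \<and> (\<forall>c'\<in>C. c' \<bullet> G x \<le> c \<bullet> G x)"
proof -
  have "continuous_on C (\<lambda>c. c \<bullet> G x)" by (intro continuous_intros)
  then obtain c where c: "c \<in> C" "\<forall>c'\<in>C. c' \<bullet> G x \<le> c \<bullet> G x"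
    using continuous_attains_sup[OF assms] by blast
  have "scal_max C G x = c \<bullet> G x" unfolding scal_max_def
    by (rule cSup_eq_maximum) (use c in auto)
  then show ?thesis using c by auto
qed

lemma bdd_quad:
  fixes f :: "'n::euclidean_space \<Rightarrow> real"
  assumes "\<And>y. f y \<ge> f x0 + L (y - x0) + (1/2) * (norm (y - x0))\<^sup>2 * m"
    and "bounded_linear L" "m > 0"
  shows "bdd_below (range f)"
proof -
  obtain B where B: "B > 0" "\<forall>h. norm (L h) \<le> norm h * B"
    using bounded_linear.pos_bounded[OF assms(2)] by blast
  have "f y \<ge> f x0 - (B*B) / (2*m)" for y
  proof -
    define t where "t = norm (y - x0)"
    have "L (y - x0) \<ge> - (t * B)" using B(2)[rule_format, of "y - x0"] unfolding t_def by auto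
    moreover have "- (t * B) + (1/2) * (t*t) * m \<ge> - (B*B) / (2*m)"
    proof -
      have "(m * t - B)^2 \<ge> 0" by simp
      then have "m * (- (t * B) + (1/2) * (t*t) * m) \<ge> m * (- (B*B) / (2*m))"
        using assms(3) by (simp add: field_simps power2_eq_square)
      then show ?thesis using assms(3) by (simp add: field_simps)
    qed
    ultimately show ?thesis using assms(1)[of y] unfolding t_def by (simp add: power2_eq_square)
  qed
  then show ?thesis by (intro bdd_belowI2) auto
qed

lemma minimax:
  fixes C :: "'m::euclidean_space set" and G :: "'n::euclidean_space \<Rightarrow> 'm"
  assumes cC: "compact C" and vC: "convex C" and neC: "C \<noteq> {}"
    and cvx: "\<And>c x w. c \<in> C \<Longrightarrow> c \<bullet> G x \<ge> c \<bullet> G w + c \<bullet> G' w (x - w)"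
    and lin: "\<And>w. linear (G' w)"
    and mn: "is_minimizer (scal_max C G) xk1"
  shows "\<exists>c0\<in>C. \<forall>x. c0 \<bullet> G x \<ge> scal_max C G xk1"
proof -
  define p where "p = scal_max C G xk1"
  define D where "D = {y. \<exists>x. \<forall>c\<in>C. c \<bullet> G x \<le> c \<bullet> y}"
  define S :: "('m \<times> real) set" where "S = {(y, s). y \<in> D \<and> s = - p}"
  define T :: "('m \<times> real) set" where "T = {(y, s). \<forall>c\<in>C. c \<bullet> y + s < 0}"
  have convD: "convex D" unfolding convex_def
  proof (intro allI impI ballI)
    fix y1 y2 and u v :: real
    assume y: "y1 \<in> D" "y2 \<in> D" and uv: "0 \<le> u" "0 \<le> v" "u + v = 1"
    obtain x1 where x1: "\<forall>c\<in>C. c \<bullet> G x1 \<le> c \<bullet> y1" using y D_def by blast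
    obtain x2 where x2: "\<forall>c\<in>C. c \<bullet> G x2 \<le> c \<bullet> y2" using y D_def by blast
    define w where "w = u *\<^sub>R x1 + v *\<^sub>R x2"
    have "\<forall>c\<in>C. c \<bullet> G w \<le> c \<bullet> (u *\<^sub>R y1 + v *\<^sub>R y2)"
    proof
      fix c assume c: "c \<in> C"
      have "u *\<^sub>R (x1 - w) + v *\<^sub>R (x2 - w) = (u *\<^sub>R x1 + v *\<^sub>R x2) - (u + v) *\<^sub>R w"
        by (simp add: algebra_simps)
      then have "u *\<^sub>R (x1 - w) + v *\<^sub>R (x2 - w) = 0"
        using uv unfolding w_def by simp
      moreover have "G' w (u *\<^sub>R (x1 - w) + v *\<^sub>R (x2 - w)) = u *\<^sub>R G' w (x1 - w) + v *\<^sub>R G' w (x2 - w)"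
        by (simp add: linear_add[OF lin[of w]] linear_scale[OF lin[of w]])
      ultimately have "u *\<^sub>R G' w (x1 - w) + v *\<^sub>R G' w (x2 - w) = 0"
        using linear_0[OF lin[of w]] by simp
      then have "c \<bullet> (u *\<^sub>R G' w (x1 - w) + v *\<^sub>R G' w (x2 - w)) = 0" by simp
      then have h3: "u * (c \<bullet> G' w (x1 - w)) + v * (c \<bullet> G' w (x2 - w)) = 0"
        by (simp add: inner_add_right)
      have "c \<bullet> G x1 \<ge> c \<bullet> G w + c \<bullet> G' w (x1 - w)" using cvx c by blast
      then have h1: "u * (c \<bullet> G x1) \<ge> u * (c \<bullet> G w) + u * (c \<bullet> G' w (x1 - w))"
        using uv(1) by (metis distrib_left mult_left_mono)
      have "c \<bullet> G x2 \<ge> c \<bullet> G w + c \<bullet> G' w (x2 - w)" using cvx c by blast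
      then have h2: "v * (c \<bullet> G x2) \<ge> v * (c \<bullet> G w) + v * (c \<bullet> G' w (x2 - w))"
        using uv(2) by (metis distrib_left mult_left_mono)
      have h4: "u * (c \<bullet> G w) + v * (c \<bullet> G w) = c \<bullet> G w" using uv by (metis distrib_right mult_1)
      have "c \<bullet> G w \<le> u * (c \<bullet> G x1) + v * (c \<bullet> G x2)"
        using h1 h2 h3 h4 by linarith
      also have "\<dots> \<le> u * (c \<bullet> y1) + v * (c \<bullet> y2)"
        using x1 x2 c uv by (simp add: add_mono mult_left_mono)
      finally show "c \<bullet> G w \<le> c \<bullet> (u *\<^sub>R y1 + v *\<^sub>R y2)" by (simp add: inner_add_right)
    qed
    then show "u *\<^sub>R y1 + v *\<^sub>R y2 \<in> D" unfolding D_def by blast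
  qed
  have convS: "convex S" unfolding convex_def
  proof (intro allI impI ballI)
    fix z1 z2 and u v :: real
    assume z: "z1 \<in> S" "z2 \<in> S" and uv: "0 \<le> u" "0 \<le> v" "u + v = 1"
    obtain y1 where y1: "z1 = (y1, -p)" "y1 \<in> D" using z S_def by auto
    obtain y2 where y2: "z2 = (y2, -p)" "y2 \<in> D" using z S_def by auto
    have "u *\<^sub>R y1 + v *\<^sub>R y2 \<in> D" using convD y1 y2 uv unfolding convex_def by blast
    moreover have "u * (-p) + v * (-p) = -p" using uv by (metis distrib_right mult_1)
    ultimately show "u *\<^sub>R z1 + v *\<^sub>R z2 \<in> S" using y1 y2 unfolding S_def by simp
  qed
  have convT: "convex T" unfolding convex_def
  proof (intro allI impI ballI)
    fix z1 z2 and u v :: real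
    assume z: "z1 \<in> T" "z2 \<in> T" and uv: "0 \<le> u" "0 \<le> v" "u + v = 1"
    obtain y1 s1 where y1: "z1 = (y1, s1)" by fastforce
    obtain y2 s2 where y2: "z2 = (y2, s2)" by fastforce
    have "\<forall>c\<in>C. c \<bullet> (u *\<^sub>R y1 + v *\<^sub>R y2) + (u * s1 + v * s2) < 0"
    proof
      fix c assume c: "c \<in> C"
      have a: "c \<bullet> y1 + s1 < 0" "c \<bullet> y2 + s2 < 0" using z y1 y2 c T_def by auto
      have "c \<bullet> (u *\<^sub>R y1 + v *\<^sub>R y2) + (u * s1 + v * s2) = u * (c \<bullet> y1 + s1) + v * (c \<bullet> y2 + s2)"
        by (simp add: inner_add_right algebra_simps)
      also have "\<dots> < 0"
      proof (cases "u = 0")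
        case True then show ?thesis using uv a by simp
      next
        case False then have "u > 0" using uv by simp
        then have "u * (c \<bullet> y1 + s1) < 0" using a by (simp add: mult_pos_neg)
        moreover have "v * (c \<bullet> y2 + s2) \<le> 0" using a uv by (simp add: mult_nonneg_nonpos)
        ultimately show ?thesis by simp
      qed
      finally show "c \<bullet> (u *\<^sub>R y1 + v *\<^sub>R y2) + (u * s1 + v * s2) < 0" .
    qed
    then show "u *\<^sub>R z1 + v *\<^sub>R z2 \<in> T" using y1 y2 unfolding T_def by simp
  qed
  have GD: "G x \<in> D" for x unfolding D_def by blast
  have neS: "S \<noteq> {}" using GD unfolding S_def by blast
  have T0: "(0, -1) \<in> T" unfolding T_def by simp
  then have neT: "T \<noteq> {}" by blast
  have disj: "S \<inter> T = {}"
  proof (rule ccontr)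
    assume "S \<inter> T \<noteq> {}"
    then obtain y x where y: "(y, -p) \<in> T" "\<forall>c\<in>C. c \<bullet> G x \<le> c \<bullet> y"
      unfolding S_def D_def by blast
    obtain c where c: "c \<in> C" "c \<bullet> G x = scal_max C G x"
      using scal_max_attained[OF cC neC, of G x] by blast
    have "p \<le> scal_max C G x" using mn unfolding p_def is_minimizer_def by blast
    moreover have "c \<bullet> y + - p < 0" using y c unfolding T_def by auto
    ultimately show False using y c by force
  qed
  obtain ah b where ah: "ah \<noteq> 0" "\<forall>z\<in>S. ah \<bullet> z \<le> b" "\<forall>z\<in>T. b \<le> ah \<bullet> z"
    using separating_hyperplane_sets[OF convS convT neS neT disj] by blast
  obtain a \<alpha> where aa: "ah = (a, \<alpha>)" by fastforce
  have Tcone: "(t *\<^sub>R y, t * s) \<in> T" if "(y, s) \<in> T" "t > 0" for y s t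
  proof -
    have "c \<bullet> (t *\<^sub>R y) + t * s < 0" if "c \<in> C" for c
    proof -
      have "c \<bullet> y + s < 0" using \<open>(y, s) \<in> T\<close> that T_def by auto
      then have "t * (c \<bullet> y + s) < 0" using \<open>t > 0\<close> by (simp add: mult_pos_neg)
      then show ?thesis by (simp add: algebra_simps)
    qed
    then show ?thesis unfolding T_def by simp
  qed
  have Tpos: "a \<bullet> y + \<alpha> * s \<ge> 0" if "(y, s) \<in> T" for y s
  proof (rule ccontr)
    assume neg: "\<not> a \<bullet> y + \<alpha> * s \<ge> 0"
    have b1: "b \<le> a \<bullet> y + \<alpha> * s" using ah(3) that aa by fastforce
    then have bneg: "b < 0" using neg by linarith
    define t where "t = 2 * b / (a \<bullet> y + \<alpha> * s)"
    have t0: "t > 0" unfolding t_def using bneg neg by (simp add: divide_neg_neg)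
    have "b \<le> a \<bullet> (t *\<^sub>R y) + \<alpha> * (t * s)" using ah(3) Tcone[OF that t0] aa by fastforce
    also have "\<dots> = t * (a \<bullet> y + \<alpha> * s)" by (simp add: algebra_simps)
    also have "\<dots> = 2 * b" unfolding t_def using neg by simp
    finally show False using bneg by simp
  qed
  have al: "\<alpha> \<le> 0" using Tpos[OF T0] by simp
  obtain B where B: "\<forall>c\<in>C. norm c \<le> B" using compact_imp_bounded[OF cC] bounded_iff by blast
  have alneg: "\<alpha> < 0"
  proof (rule ccontr)
    assume "\<not> \<alpha> < 0" then have a0: "\<alpha> = 0" using al by simp
    have "(-a, - (B * norm a) - 1) \<in> T" unfolding T_def
    proof (clarify)
      fix c assume c: "c \<in> C"
      have "c \<bullet> (-a) \<le> norm c * norm (-a)" by (rule norm_cauchy_schwarz)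
      also have "\<dots> \<le> B * norm a" using B c by (simp add: mult_right_mono)
      finally show "c \<bullet> - a + (- (B * norm a) - 1) < 0" by simp
    qed
    then have "a \<bullet> (-a) \<ge> 0" using Tpos a0 by fastforce
    then have "a \<bullet> a = 0" using inner_ge_zero[of a] by (simp add: inner_minus_right)
    then have "a = 0" by simp
    then show False using ah(1) aa a0 by (simp add: zero_prod_def)
  qed
  define c0 where "c0 = (1 / \<alpha>) *\<^sub>R a"
  have bnp: "b \<le> 0"
  proof (rule ccontr)
    assume "\<not> b \<le> 0"
    then have bp: "b > 0" by simp
    define t where "t = - b / (2 * \<alpha>)"
    have t0: "t > 0" unfolding t_def using bp alneg by (simp add: divide_pos_neg)
    have "(0, - t) \<in> T" using Tcone[OF T0 t0] by simp
    then have "b \<le> - \<alpha> * t" using ah(3) aa by fastforce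
    also have "\<dots> = b / 2" unfolding t_def using alneg by simp
    finally show False using bp by simp
  qed
  have c0C: "c0 \<in> C"
  proof (rule ccontr)
    assume "c0 \<notin> C"
    then obtain u d where ud: "u \<bullet> c0 < d" "\<forall>c\<in>C. u \<bullet> c > d"
      using separating_hyperplane_closed_point[OF vC compact_imp_closed[OF cC]] by blast
    have "(-u, d) \<in> T" unfolding T_def using ud(2) by (auto simp: inner_commute)
    then have "a \<bullet> (-u) + \<alpha> * d \<ge> 0" using Tpos by blast
    moreover have "1/\<alpha> \<le> 0" using alneg by simp
    ultimately have "(1/\<alpha>) * (a \<bullet> (-u) + \<alpha> * d) \<le> 0"
      by (metis mult.commute mult_nonneg_nonpos)
    then have "- (u \<bullet> c0) + d \<le> 0" unfolding c0_def using alneg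
      by (simp add: algebra_simps inner_commute)
    then show False using ud(1) by simp
  qed
  have "c0 \<bullet> G x \<ge> p" for x
  proof -
    have "(G x, -p) \<in> S" using GD S_def by blast
    then have "a \<bullet> G x + \<alpha> * (-p) \<le> 0" using ah(2) aa bnp by fastforce
    moreover have "1/\<alpha> \<le> 0" using alneg by simp
    ultimately have "(1/\<alpha>) * (a \<bullet> G x + \<alpha> * (-p)) \<ge> 0"
      by (metis mult_nonpos_nonpos)
    then show ?thesis unfolding c0_def using alneg by (simp add: algebra_simps)
  qed
  then show ?thesis using c0C unfolding p_def by blast
qed

theorem lemma3p1:
  fixes K C :: "'m::euclidean_space set"
    and F :: "'n::euclidean_space \<Rightarrow> 'm" and F' :: "'n \<Rightarrow> 'n \<Rightarrow> 'm"
    and ell \<mu> :: 'm and xk xk1 :: 'n and G :: "'n \<Rightarrow> 'm" and ck :: 'm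
  assumes "proper_cone K"
    and "compact C" "convex C" "0 \<notin> C" "cone hull C = dual_cone K"
    and "\<And>x. (F has_derivative F' x) (at x)"
    and "ell \<in> K" "\<mu> \<in> interior K"
    and "G \<in> surrogate_class K C F F' ell \<mu> xk"
    and "is_minimizer (scal_max C G) xk1"
    and "ck \<in> C" "\<forall>c\<in>C. (INF x. c \<bullet> G x) \<le> (INF x. ck \<bullet> G x)"
  shows "\<forall>x. cone_le K (H_of G F xk x) (((1/2) * (norm (x - xk))\<^sup>2) *\<^sub>R ell) \<and>
              ck \<bullet> F xk1 + (1/2) * (norm (xk1 - x))\<^sup>2 * (ck \<bullet> \<mu>)
                \<le> ck \<bullet> F x + (1/2) * (norm (xk - x))\<^sup>2 * (ck \<bullet> ell)"
proof -
  note A = assms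
  from A(9) obtain G' where P: "(\<forall>x. (G has_derivative G' x) (at x)) \<and>
      strongly_K_convex K G G' \<mu> \<and>
      (\<exists>!z. is_minimizer (scal_max C G) z) \<and>
      (\<forall>z. is_minimizer (scal_max C G) z \<longrightarrow> cone_le K (F z - F xk) (G z)) \<and>
      K_smooth K (H_of G F xk) (\<lambda>x h. G' x h - F' x h) ell \<and>
      H_of G F xk xk = 0 \<and>
      (\<lambda>h. G' xk h - F' xk h) = (\<lambda>h. 0)"
    unfolding surrogate_class_def mem_Collect_eq by (elim exE) (rule that)
  have G'd: "\<And>x. (G has_derivative G' x) (at x)" using P by (elim conjE) blast
  have sc: "strongly_K_convex K G G' \<mu>" using P by (elim conjE)
  have mnz: "\<And>z. is_minimizer (scal_max C G) z \<Longrightarrow> cone_le K (F z - F xk) (G z)"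
    using P by (elim conjE) blast
  have sm: "K_smooth K (H_of G F xk) (\<lambda>x h. G' x h - F' x h) ell" using P by (elim conjE)
  have H0: "H_of G F xk xk = 0" using P by (elim conjE)
  have Hd: "(\<lambda>h. G' xk h - F' xk h) = (\<lambda>h. 0)" using P by (elim conjE)
  have dual: "\<forall>y\<in>K. c \<bullet> y \<ge> 0" if "c \<in> C" for c
  proof -
    have "c \<in> cone hull C" using that by (rule hull_inc)
    then have "c \<in> dual_cone K" using A(5) by simp
    then show ?thesis unfolding dual_cone_def by blast
  qed
  have \<mu>K: "\<mu> \<in> K" using A(8) interior_subset[of K] by (rule subsetD[rotated])
  have neC: "C \<noteq> {}" using A(11) by blast
  have part1: "cone_le K (H_of G F xk x) (((1/2) * (norm (x - xk))\<^sup>2) *\<^sub>R ell)" for x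
  proof -
    have "cone_le K (H_of G F xk x - H_of G F xk xk)
            (G' xk (x - xk) - F' xk (x - xk) + ((1/2) * (norm (x - xk))\<^sup>2) *\<^sub>R ell)"
      using sm unfolding K_smooth_def by blast
    moreover have "G' xk (x - xk) - F' xk (x - xk) = 0" using fun_cong[OF Hd, of "x - xk"] by simp
    ultimately show ?thesis using H0 by simp
  qed
  have cvx: "c \<bullet> G x \<ge> c \<bullet> G w + c \<bullet> G' w (x - w)" if "c \<in> C" for c x w
  proof -
    have "c \<bullet> \<mu> \<ge> 0" using dual[OF that] \<mu>K by blast
    then have "(1/2) * (norm (x - w))\<^sup>2 * (c \<bullet> \<mu>) \<ge> 0" by simp
    then show ?thesis using scal_sc[OF sc dual[OF that], of w x] by linarith
  qed
  have lin: "linear (G' w)" for w using has_derivative_linear[OF G'd] .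
  obtain c0 where c0: "c0 \<in> C" "\<forall>x. c0 \<bullet> G x \<ge> scal_max C G xk1"
    using minimax[OF A(2,3) neC cvx lin A(10)] by blast
  define p where "p = scal_max C G xk1"
  have "p \<le> (INF x. c0 \<bullet> G x)" unfolding p_def by (rule cINF_greatest) (use c0 in auto)
  also have "\<dots> \<le> (INF x. ck \<bullet> G x)" using A(12) c0(1) by blast
  finally have pinf: "p \<le> (INF x. ck \<bullet> G x)" .
  have ck0: "ck \<noteq> 0" using A(4,11) by blast
  have ckmu: "ck \<bullet> \<mu> > 0"
  proof -
    obtain r where r: "r > 0" "ball \<mu> r \<subseteq> K" using A(8) mem_interior by blast
    define z where "z = \<mu> - (r / 2 / norm ck) *\<^sub>R ck"
    have "dist \<mu> z < r" unfolding z_def dist_norm using r(1) ck0 by simp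
    then have "z \<in> K" using r(2) by auto
    then have "ck \<bullet> z \<ge> 0" using dual[OF A(11)] by blast
    moreover have "ck \<bullet> z = ck \<bullet> \<mu> - (r / 2 / norm ck) * (ck \<bullet> ck)"
      unfolding z_def by (simp add: inner_diff_right)
    moreover have "(r / 2 / norm ck) * (ck \<bullet> ck) = r / 2 * norm ck"
      using ck0 by (simp add: power2_norm_eq_inner[symmetric] power2_eq_square)
    moreover have "r / 2 * norm ck > 0" using r(1) ck0 by simp
    ultimately show ?thesis by linarith
  qed
  have scck: "ck \<bullet> G y \<ge> ck \<bullet> G x + ck \<bullet> G' x (y - x) + (1/2) * (norm (y - x))\<^sup>2 * (ck \<bullet> \<mu>)" for x y
    using scal_sc[OF sc dual[OF A(11)]] .
  have bl: "bounded_linear (\<lambda>h. ck \<bullet> G' xk1 h)"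
    using bounded_linear_inner_right_comp[OF has_derivative_bounded_linear[OF G'd]] .
  have bdd: "bdd_below (range (\<lambda>x. ck \<bullet> G x))"
    by (rule bdd_quad[OF _ bl ckmu]) (rule scck)
  have ckle: "ck \<bullet> G xk1 \<le> p"
    using scal_max_attained[OF A(2) neC, of G xk1] A(11) unfolding p_def by auto
  have minck: "ck \<bullet> G xk1 \<le> ck \<bullet> G x" for x
  proof -
    have "(INF x. ck \<bullet> G x) \<le> ck \<bullet> G x" by (rule cINF_lower[OF bdd]) simp
    then show ?thesis using pinf ckle by linarith
  qed
  have der: "((\<lambda>x. ck \<bullet> G x) has_derivative (\<lambda>h. ck \<bullet> G' xk1 h)) (at xk1)"
    using has_derivative_inner_right[OF G'd] .
  have d0: "(\<lambda>h. ck \<bullet> G' xk1 h) = (\<lambda>h. 0)"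
    by (rule has_derivative_local_min[OF der]) (simp add: minck always_eventually)
  show ?thesis
  proof (intro allI conjI)
    fix x
    show "cone_le K (H_of G F xk x) (((1/2) * (norm (x - xk))\<^sup>2) *\<^sub>R ell)" by (rule part1)
    have s1: "ck \<bullet> G x \<ge> ck \<bullet> G xk1 + (1/2) * (norm (x - xk1))\<^sup>2 * (ck \<bullet> \<mu>)"
      using scck[of xk1 x] fun_cong[OF d0, of "x - xk1"] by simp
    have "G xk1 - (F xk1 - F xk) \<in> K" using mnz[OF A(10)] unfolding cone_le_def .
    then have s2: "ck \<bullet> (G xk1 - (F xk1 - F xk)) \<ge> 0" using dual[OF A(11)] by blast
    have "((1/2) * (norm (x - xk))\<^sup>2) *\<^sub>R ell - H_of G F xk x \<in> K"
      using part1[of x] unfolding cone_le_def .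
    then have s3: "ck \<bullet> (((1/2) * (norm (x - xk))\<^sup>2) *\<^sub>R ell - H_of G F xk x) \<ge> 0"
      using dual[OF A(11)] by blast
    have n1: "norm (xk1 - x) = norm (x - xk1)" "norm (xk - x) = norm (x - xk)"
      by (simp_all add: norm_minus_commute)
    show "ck \<bullet> F xk1 + (1/2) * (norm (xk1 - x))\<^sup>2 * (ck \<bullet> \<mu>)
                \<le> ck \<bullet> F x + (1/2) * (norm (xk - x))\<^sup>2 * (ck \<bullet> ell)"
      using s1 s2 s3 unfolding n1 H_of_def by (simp add: inner_diff_right inner_add_right)
  qed
qed

end
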